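(* Every quadrangle of $Q$ is a face of exactly $(q-1)^2(q+1)$ centric cubes of $Q$.
   Context: Let $q=2^n$, $V=V(6,q)$, and let $Q=Q^-(5,q)$ be the set of singular points of a non-degenerate quadratic form $f$ of Witt index $2$ on $V$, viewed as a generalized quadrangle of order $(q,q^2)$ with the totally singular lines as lines; $\perp$ is orthogonality with respect to the bilinear form of $f$, and two distinct points of $Q$ are collinear iff orthogonal. A quadrangle of $Q$ is a set of four distinct points $a,b,c,d$ of $Q$ with $a\perp b\perp c\perp d\perp a$, $a\not\perp c$, $b\not\perp d$. For a point $p\notin Q$, a centric cube of $Q$ with center $p$ is a set of eight points $\{x_i^a: i=1,\dots,4,\ a=1,2\}$ of $Q\setminus p^\perp$ such that $x_i^a$ and $x_j^b$ are collinear in $Q$ iff $i\neq j$ and $a\neq b$, and such that for each $i$ the points $p,x_i^1,x_i^2$ are on a common projective line. A centric cube of $Q$ is a centric cube with some center $p\notin Q$. A face of such a cube is a set of four of its points, one from each pair $\{x_i^1,x_i^2\}$, whose induced collinearity graph is a $4$-cycle. *)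

theory Defs
  imports "HOL-Analysis.Analysis"
begin

definition quadratic_form :: "('a::field^6 \<Rightarrow> 'a) \<Rightarrow> bool" where
  "quadratic_form f \<longleftrightarrow> (\<exists>A :: 6 \<Rightarrow> 6 \<Rightarrow> 'a. \<forall>x. f x = (\<Sum>i\<in>UNIV. \<Sum>j\<in>UNIV. A i j * x$i * x$j))"

definition polar :: "('a::field^6 \<Rightarrow> 'a) \<Rightarrow> 'a^6 \<Rightarrow> 'a^6 \<Rightarrow> 'a" where
  "polar f u v = f (u + v) - f u - f v"

definition nondegenerate :: "('a::field^6 \<Rightarrow> 'a) \<Rightarrow> bool" where
  "nondegenerate f \<longleftrightarrow> (\<forall>v. v \<noteq> 0 \<longrightarrow> (\<exists>w. polar f v w \<noteq> 0))"

definition totally_singular :: "('a::field^6 \<Rightarrow> 'a) \<Rightarrow> ('a^6) set \<Rightarrow> bool" where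
  "totally_singular f S \<longleftrightarrow> vec.subspace S \<and> (\<forall>v\<in>S. f v = 0)"

definition witt_index :: "('a::field^6 \<Rightarrow> 'a) \<Rightarrow> nat \<Rightarrow> bool" where
  "witt_index f k \<longleftrightarrow> (\<exists>S. totally_singular f S \<and> vec.dim S = k)
       \<and> (\<forall>S. totally_singular f S \<longrightarrow> vec.dim S \<le> k)"

definition proj_points :: "('a::field^6) set set" where
  "proj_points = {P. vec.subspace P \<and> vec.dim P = 1}"

definition Qpts :: "('a::field^6 \<Rightarrow> 'a) \<Rightarrow> ('a^6) set set" where
  "Qpts f = {P \<in> proj_points. \<forall>v\<in>P. f v = 0}"

definition perp :: "('a::field^6 \<Rightarrow> 'a) \<Rightarrow> ('a^6) set \<Rightarrow> ('a^6) set \<Rightarrow> bool" where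
  "perp f P R \<longleftrightarrow> (\<forall>u\<in>P. \<forall>w\<in>R. polar f u w = 0)"

definition collinearQ :: "('a::field^6 \<Rightarrow> 'a) \<Rightarrow> ('a^6) set \<Rightarrow> ('a^6) set \<Rightarrow> bool" where
  "collinearQ f P R \<longleftrightarrow> P \<in> Qpts f \<and> R \<in> Qpts f \<and> P \<noteq> R \<and> perp f P R"

definition on_common_line :: "('a::field^6) set \<Rightarrow> ('a^6) set \<Rightarrow> ('a^6) set \<Rightarrow> bool" where
  "on_common_line P R S \<longleftrightarrow>
     (\<exists>L. vec.subspace L \<and> vec.dim L = 2 \<and> P \<subseteq> L \<and> R \<subseteq> L \<and> S \<subseteq> L)"

definition is_quadrangle :: "('a::field^6 \<Rightarrow> 'a) \<Rightarrow> ('a^6) set \<Rightarrow> ('a^6) set \<Rightarrow> ('a^6) set \<Rightarrow> ('a^6) set \<Rightarrow> bool" where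
  "is_quadrangle f a b c d \<longleftrightarrow>
     a \<in> Qpts f \<and> b \<in> Qpts f \<and> c \<in> Qpts f \<and> d \<in> Qpts f \<and> distinct [a, b, c, d] \<and>
     perp f a b \<and> perp f b c \<and> perp f c d \<and> perp f d a \<and> \<not> perp f a c \<and> \<not> perp f b d"

definition quadrangle_set :: "('a::field^6 \<Rightarrow> 'a) \<Rightarrow> ('a^6) set set \<Rightarrow> bool" where
  "quadrangle_set f F \<longleftrightarrow> (\<exists>a b c d. F = {a, b, c, d} \<and> is_quadrangle f a b c d)"

definition centric_cube_wrt :: "('a::field^6 \<Rightarrow> 'a) \<Rightarrow> ('a^6) set \<Rightarrow> (nat \<Rightarrow> nat \<Rightarrow> ('a^6) set) \<Rightarrow> bool" where
  "centric_cube_wrt f p x \<longleftrightarrow>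
     p \<in> proj_points \<and> p \<notin> Qpts f \<and>
     inj_on (\<lambda>(i, a). x i a) ({1..4} \<times> {1..2}) \<and>
     (\<forall>i\<in>{1..4}. \<forall>a\<in>{1..2}. x i a \<in> Qpts f \<and> \<not> perp f p (x i a)) \<and>
     (\<forall>i\<in>{1..4}. \<forall>a\<in>{1..2}. \<forall>j\<in>{1..4}. \<forall>b\<in>{1..2}. (i, a) \<noteq> (j, b) \<longrightarrow>
        (collinearQ f (x i a) (x j b) \<longleftrightarrow> i \<noteq> j \<and> a \<noteq> b)) \<and>
     (\<forall>i\<in>{1..4}. on_common_line p (x i 1) (x i 2))"

definition cube_points :: "(nat \<Rightarrow> nat \<Rightarrow> ('a^6) set) \<Rightarrow> ('a^6) set set" where
  "cube_points x = (\<lambda>(i, a). x i a) ` ({1..4} \<times> {1..2})"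

definition centric_cube :: "('a::field^6 \<Rightarrow> 'a) \<Rightarrow> ('a^6) set set \<Rightarrow> bool" where
  "centric_cube f C \<longleftrightarrow> (\<exists>p x. centric_cube_wrt f p x \<and> C = cube_points x)"

definition face_of_cube :: "('a::field^6 \<Rightarrow> 'a) \<Rightarrow> ('a^6) set set \<Rightarrow> ('a^6) set set \<Rightarrow> bool" where
  "face_of_cube f F C \<longleftrightarrow> (\<exists>p x. centric_cube_wrt f p x \<and> C = cube_points x \<and>
     (\<exists>s. (\<forall>i\<in>{1..4}. s i \<in> {1..2}) \<and> F = (\<lambda>i. x i (s i)) ` {1..4} \<and> quadrangle_set f F))"

end

theory Submission
  imports Defs "HOL-Library.Cardinality" "HOL-Number_Theory.Residues" "HOL-Computational_Algebra.Primes"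
begin

lemma char2_of_card:
  assumes "CARD('a::{finite,field}) = 2 ^ n"
  shows "(2::'a) = 0"
proof -
  have "CHAR('a) dvd CARD('a)" by (rule CHAR_dvd_CARD)
  moreover have "CARD('a) > 0" by simp
  ultimately have "CHAR('a) \<noteq> 0" by (metis dvd_0_left_iff less_irrefl)
  hence "prime CHAR('a)" using prime_CHAR_semidom by auto
  moreover have "CHAR('a) dvd 2 ^ n" using assms \<open>CHAR('a) dvd CARD('a)\<close> by simp
  ultimately have "CHAR('a) dvd 2" using prime_dvd_power by blast
  hence "CHAR('a) = 2" using \<open>prime CHAR('a)\<close>
    by (metis two_is_prime_nat prime_nat_iff not_prime_1)
  hence "of_nat 2 = (0::'a)" using of_nat_CHAR[where 'a='a] by simp
  thus ?thesis by simp
qed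


locale qf2 =
  fixes f :: "'a::field^6 \<Rightarrow> 'a" and qA :: "6 \<Rightarrow> 6 \<Rightarrow> 'a"
  assumes fA: "f x = (\<Sum>i\<in>UNIV. \<Sum>j\<in>UNIV. qA i j * x $ i * x $ j)" and ch2: "(2::'a) = 0"
begin

abbreviation B where "B \<equiv> polar f"

lemma one_one: "(1::'a) + 1 = 0" using ch2 by (simp add: one_add_one)
lemma xx: "(x::'a) + x = 0"
proof -
  have "x + x = 2 * x" by (simp only: mult_2)
  thus ?thesis using ch2 by simp
qed
lemma three: "(3::'a) = 1"
proof -
  have "(3::'a) = 2 + 1" by simp
  thus ?thesis using ch2 by simp
qed
lemma neg_id: "- (x::'a) = x" by (simp add: neg_eq_iff_add_eq_0 xx)
lemma minus_is_plus: "(x::'a) - y = x + y" by (simp add: diff_conv_add_uminus neg_id)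

lemma polarA: "B u v = (\<Sum>i\<in>UNIV. \<Sum>j\<in>UNIV. qA i j * (u $ i * v $ j + v $ i * u $ j))"
proof -
  have "B u v = (\<Sum>i\<in>UNIV. \<Sum>j\<in>UNIV. qA i j * (u $ i + v $ i) * (u $ j + v $ j) - qA i j * u $ i * u $ j - qA i j * v $ i * v $ j)"
    unfolding polar_def fA by (simp only: sum_subtractf vector_add_component)
  also have "\<dots> = (\<Sum>i\<in>UNIV. \<Sum>j\<in>UNIV. qA i j * (u $ i * v $ j + v $ i * u $ j))"
    by (rule sum.cong[OF refl], rule sum.cong[OF refl], simp add: algebra_simps)
  finally show ?thesis .
qed

lemma polar_add1: "B (u + w) v = B u v + B w v"
  unfolding polarA sum.distrib[symmetric]
  by (rule sum.cong[OF refl], rule sum.cong[OF refl], simp add: algebra_simps)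

lemma polar_smult1: "B (t *s u) v = t * B u v"
  unfolding polarA sum_distrib_left
  by (rule sum.cong[OF refl], rule sum.cong[OF refl], simp add: algebra_simps)

lemma polar_sym: "B u v = B v u"
  by (simp add: polar_def add.commute)

lemma polar_add2: "B v (u + w) = B v u + B v w"
  by (simp add: polar_sym[of v] polar_add1)

lemma polar_smult2: "B v (t *s u) = t * B v u"
  by (simp add: polar_sym[of v] polar_smult1)

lemma f_smult: "f (t *s u) = t * t * f u"
  unfolding fA sum_distrib_left
  by (rule sum.cong[OF refl], rule sum.cong[OF refl], simp add: algebra_simps)

lemma f_zero[simp]: "f 0 = 0" using f_smult[of 0 0] by simp

lemma f_add: "f (u + v) = f u + f v + B u v"
  by (simp add: polar_def)

lemma polar_self[simp]: "B u u = 0"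
proof -
  have "u + u = (2::'a) *s u" by (simp only: vec_eq_iff vector_add_component vector_smult_component mult_2 simp_thms)
  hence "f (u + u) = f ((2::'a) *s u)" by simp
  hence "f (u+u) = 4 * f u" by (simp add: f_smult)
  thus ?thesis using ch2 by (simp add: polar_def)
qed

lemma polar_zero1[simp]: "B 0 v = 0" using polar_smult1[of 0 0 v] by simp
lemma polar_zero2[simp]: "B v 0 = 0" using polar_smult2[of v 0 0] by simp

lemma polar_neg1: "B (- u) v = - B u v"
  using polar_smult1[of "-1" u v] by simp
lemma polar_diff1: "B (u - w) v = B u v - B w v"
  using polar_add1[of u "-w" v] polar_neg1 by simp
lemma polar_neg2: "B v (- u) = - B v u"
  by (simp add: polar_sym[of v] polar_neg1)
lemma polar_diff2: "B v (u - w) = B v u - B v w"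
  by (simp add: polar_sym[of v] polar_diff1)

lemmas polar_simps = polar_add1 polar_add2 polar_smult1 polar_smult2 polar_diff1 polar_diff2
   polar_neg1 polar_neg2

end

definition pt :: "'a::field^6 \<Rightarrow> ('a^6) set" where "pt v = vec.span {v}"

lemma pt_mem: "x \<in> pt v \<longleftrightarrow> (\<exists>t. x = t *s v)"
  unfolding pt_def vec.span_singleton by auto

lemma self_in_pt: "v \<in> pt v"
  using pt_mem[of v v] by (metis vector_smult_lid)

lemma pt_eq_scale: "pt u = pt v \<Longrightarrow> \<exists>r. u = r *s v"
  using self_in_pt[of u] pt_mem by blast

lemma pt_smult: "(t::'a::field) \<noteq> 0 \<Longrightarrow> pt (t *s v) = pt v"
proof -
  assume t: "t \<noteq> 0"
  have "x \<in> pt (t *s v) \<longleftrightarrow> x \<in> pt v" for x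
  proof
    assume "x \<in> pt (t *s v)" then obtain s where "x = s *s (t *s v)" using pt_mem by blast
    hence "x = (s * t) *s v" by simp
    thus "x \<in> pt v" using pt_mem by blast
  next
    assume "x \<in> pt v" then obtain s where "x = s *s v" using pt_mem by blast
    hence "x = (s / t) *s (t *s v)" using t by simp
    thus "x \<in> pt (t *s v)" using pt_mem by blast
  qed
  thus ?thesis by blast
qed

lemma proj_points_iff: "P \<in> proj_points \<longleftrightarrow> (\<exists>v. v \<noteq> 0 \<and> P = pt (v::'a::field^6))"
proof
  assume "P \<in> proj_points"
  hence sP: "vec.subspace P" and dP: "vec.dim P = 1" unfolding proj_points_def by auto
  obtain Bs where Bs: "Bs \<subseteq> P" "vec.independent Bs" "P \<subseteq> vec.span Bs" "card Bs = vec.dim P"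
    using vec.basis_exists by blast
  then obtain v where v: "Bs = {v}" using dP card_1_singletonE[of Bs] by metis
  have "v \<noteq> 0" using Bs(2) v by simp
  moreover have "P = pt v" unfolding pt_def using Bs v vec.span_minimal[OF _ sP, of "{v}"] by auto
  ultimately show "\<exists>v. v \<noteq> 0 \<and> P = pt v" by blast
next
  assume "\<exists>v. v \<noteq> 0 \<and> P = pt v"
  then obtain v where v: "v \<noteq> 0" "P = pt v" by blast
  have "vec.dim (vec.span {v}) = card {v}" by (rule vec.dim_span_eq_card_independent) (simp add: v)
  thus "P \<in> proj_points" unfolding proj_points_def pt_def v(2) by simp
qed

lemma pt_zero_iff: "pt v = pt 0 \<longleftrightarrow> v = (0::'a::field^6)"
  using pt_eq_scale[of v 0] by auto

context qf2
begin

lemma f_pt: "x \<in> pt v \<Longrightarrow> f v = 0 \<Longrightarrow> f x = 0"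
  unfolding pt_mem by (auto simp: f_smult)

lemma Qpts_pt: "pt v \<in> Qpts f \<longleftrightarrow> v \<noteq> 0 \<and> f v = 0"
proof -
  have "pt v \<in> proj_points \<longleftrightarrow> v \<noteq> 0"
    unfolding proj_points_iff using pt_zero_iff by metis
  thus ?thesis unfolding Qpts_def using f_pt self_in_pt by blast
qed

lemma perp_pt: "perp f (pt u) (pt v) \<longleftrightarrow> B u v = 0"
proof
  assume "perp f (pt u) (pt v)" thus "B u v = 0" unfolding perp_def using self_in_pt by blast
next
  assume h: "B u v = 0"
  show "perp f (pt u) (pt v)" unfolding perp_def
  proof (intro ballI)
    fix x y assume "x \<in> pt u" "y \<in> pt v"
    then obtain s t where "x = s *s u" "y = t *s v" using pt_mem by blast
    thus "B x y = 0" using h by (simp add: polar_smult1 polar_smult2)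
  qed
qed

lemma collinear_pt: "collinearQ f (pt u) (pt v) \<longleftrightarrow> u \<noteq> 0 \<and> v \<noteq> 0 \<and> f u = 0 \<and> f v = 0 \<and> pt u \<noteq> pt v \<and> B u v = 0"
  unfolding collinearQ_def Qpts_pt perp_pt by auto

lemma pt_neq: "B u z \<noteq> 0 \<Longrightarrow> B v z = 0 \<Longrightarrow> pt u \<noteq> pt v"
  using pt_eq_scale[of u v] by (auto simp: polar_smult1)

lemma pt_neq': "B u z = 0 \<Longrightarrow> B v z \<noteq> 0 \<Longrightarrow> pt u \<noteq> pt v"
  using pt_neq by metis

end

context qf2
begin

definition sig :: "'a^6 \<Rightarrow> 'a^6 \<Rightarrow> 'a^6" where "sig p u = u + (B u p / f p) *s p"

lemma B_sig1: "B (sig p u) v = B u v + B u p * B v p / f p"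
  unfolding sig_def by (simp add: polar_add1 polar_smult1 polar_sym[of p v])

lemma B_sig2: "B v (sig p u) = B v u + B u p * B v p / f p"
  unfolding sig_def by (simp add: polar_add2 polar_smult2)

lemma B_sig_p: "B (sig p u) p = B u p"
  by (simp add: B_sig1)

lemma B_sig_sig: "B (sig p u) (sig p w) = B u w"
proof -
  have "B (sig p u) (sig p w) = B u w + B u p * B w p / f p + B w p * B u p / f p"
    by (simp add: B_sig1 B_sig2 B_sig_p polar_sym[of p w] algebra_simps)
  also have "\<dots> = B u w" using xx[of "B u p * B w p / f p"] by (simp add: algebra_simps)
  finally show ?thesis .
qed

lemma f_sig: "f p \<noteq> 0 \<Longrightarrow> f (sig p u) = f u"
proof -
  assume F: "f p \<noteq> 0"
  have "f (sig p u) = f u + (B u p / f p) * (B u p / f p) * f p + B u ((B u p / f p) *s p)"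
    unfolding sig_def by (simp add: f_add f_smult)
  also have "\<dots> = f u + (B u p * B u p / f p + B u p * B u p / f p)"
    using F by (simp add: polar_smult2 field_simps)
  also have "\<dots> = f u" by (simp add: xx)
  finally show ?thesis .
qed

lemma sig_sig: "sig p (sig p u) = u"
proof -
  have "sig p (sig p u) = u + ((B u p / f p) *s p + (B u p / f p) *s p)"
    unfolding sig_def[of p "sig p u"] B_sig_p by (simp add: sig_def algebra_simps)
  also have "(B u p / f p) *s p + (B u p / f p) *s p = 0"
    by (simp add: vector_sadd_rdistrib[symmetric] xx)
  finally show ?thesis by simp
qed

lemma sig_nz: "B u p \<noteq> 0 \<Longrightarrow> sig p u \<noteq> 0"
  using B_sig_p[of p u] by auto

lemma sig_smult: "sig p (r *s v) = r *s sig p v"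
  unfolding sig_def by (simp add: polar_smult1 algebra_simps)

lemma pt_sig: "pt u = pt v \<Longrightarrow> v \<noteq> 0 \<Longrightarrow> u \<noteq> 0 \<Longrightarrow> pt (sig p u) = pt (sig p v)"
proof -
  assume h: "pt u = pt v" "v \<noteq> 0" "u \<noteq> 0"
  then obtain r where r: "u = r *s v" using pt_eq_scale by blast
  hence "r \<noteq> 0" using h(3) by auto
  thus ?thesis using r by (simp add: sig_smult pt_smult)
qed

lemma sig_span: "sig p u \<in> vec.span {u, p}"
  unfolding sig_def by (intro vec.span_add vec.span_scale vec.span_base) auto

end

locale quad = qf2 +
  fixes a0 b0 c0 d0 :: "'a^6"
  assumes fa: "f a0 = 0" and fb: "f b0 = 0" and fc: "f c0 = 0" and fd: "f d0 = 0"
    and ab: "B a0 b0 = 0" and bc: "B b0 c0 = 0" and cd: "B c0 d0 = 0" and da: "B d0 a0 = 0"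
    and ac: "B a0 c0 = 1" and bd: "B b0 d0 = 1"
begin

lemma ba: "B b0 a0 = 0" using ab polar_sym by metis
lemma cb: "B c0 b0 = 0" using bc polar_sym by metis
lemma dc: "B d0 c0 = 0" using cd polar_sym by metis
lemma ad: "B a0 d0 = 0" using da polar_sym by metis
lemma ca: "B c0 a0 = 1" using ac polar_sym by metis
lemma db: "B d0 b0 = 1" using bd polar_sym by metis

lemmas Bv = ab bc cd da ac bd ba cb dc ad ca db fa fb fc fd

lemma nz: "a0 \<noteq> 0" "b0 \<noteq> 0" "c0 \<noteq> 0" "d0 \<noteq> 0"
  using ac bd ca db by auto

definition hc :: "'a \<Rightarrow> 'a \<Rightarrow> 'a \<Rightarrow> 'a \<Rightarrow> 'a^6" where
  "hc x y z t = x *s a0 + y *s b0 + z *s c0 + t *s d0"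

definition Wsp where "Wsp = {w. B w a0 = 0 \<and> B w b0 = 0 \<and> B w c0 = 0 \<and> B w d0 = 0}"

lemma B_hc: "B (hc x y z t) c0 = x" "B (hc x y z t) d0 = y" "B (hc x y z t) a0 = z" "B (hc x y z t) b0 = t"
  unfolding hc_def by (simp_all add: polar_add1 polar_smult1 Bv)

lemma B_hc2: "B c0 (hc x y z t) = x" "B d0 (hc x y z t) = y" "B a0 (hc x y z t) = z" "B b0 (hc x y z t) = t"
  using B_hc polar_sym by metis+

lemma f_hc: "f (hc x y z t) = x * z + y * t"
  unfolding hc_def by (simp add: f_add f_smult polar_add1 polar_add2 polar_smult1 polar_smult2 Bv algebra_simps)

lemma B_w: "w \<in> Wsp \<Longrightarrow> B w a0 = 0 \<and> B w b0 = 0 \<and> B w c0 = 0 \<and> B w d0 = 0 \<and> B a0 w = 0 \<and> B b0 w = 0 \<and> B c0 w = 0 \<and> B d0 w = 0"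
  unfolding Wsp_def using polar_sym[of w a0] polar_sym[of w b0] polar_sym[of w c0] polar_sym[of w d0] by simp

lemma f_hc_w: "w \<in> Wsp \<Longrightarrow> f (hc x y z t + w) = x * z + y * t + f w"
proof -
  assume w: "w \<in> Wsp"
  have "B (hc x y z t) w = 0" unfolding hc_def using B_w[OF w] by (simp add: polar_add1 polar_smult1)
  thus ?thesis by (simp add: f_add f_hc)
qed

definition prj where "prj v = v - hc (B v c0) (B v d0) (B v a0) (B v b0)"

lemma prj_W: "prj v \<in> Wsp"
  unfolding Wsp_def prj_def by (simp add: polar_diff1 B_hc)

lemma decomp: "v = hc (B v c0) (B v d0) (B v a0) (B v b0) + prj v"
  unfolding prj_def by simp

lemma decomp_unique:
  assumes "w \<in> Wsp" "w' \<in> Wsp" "hc x y z t + w = hc x' y' z' t' + w'"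
  shows "x = x' \<and> y = y' \<and> z = z' \<and> t = t' \<and> w = w'"
proof -
  have e: "B (hc x y z t + w) u = B (hc x' y' z' t' + w') u" for u using assms(3) by simp
  have "x = x'" using e[of c0] assms(1,2) by (simp add: polar_add1 B_hc B_w)
  moreover have "y = y'" using e[of d0] assms(1,2) by (simp add: polar_add1 B_hc B_w)
  moreover have "z = z'" using e[of a0] assms(1,2) by (simp add: polar_add1 B_hc B_w)
  moreover have "t = t'" using e[of b0] assms(1,2) by (simp add: polar_add1 B_hc B_w)
  ultimately show ?thesis using assms(3) by simp
qed

end

locale quadF = quad f qA a0 b0 c0 d0
  for f :: "'a::{finite,field}^6 \<Rightarrow> 'a" and qA a0 b0 c0 d0 +
  assumes aniso: "\<And>w. w \<in> Wsp \<Longrightarrow> w \<noteq> 0 \<Longrightarrow> f w \<noteq> 0"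
begin

lemma W0: "0 \<in> Wsp" unfolding Wsp_def by simp

lemma card2: "CARD('a) \<ge> 2"
proof -
  have "card {0::'a, 1} = 2" by simp
  moreover have "card {0::'a, 1} \<le> CARD('a)" by (rule card_mono) auto
  ultimately show ?thesis by simp
qed

lemma card_Wsp: "card Wsp = CARD('a) ^ 2"
proof -
  let ?G = "\<lambda>((x,y,z,t),w). hc x y z t + w"
  let ?D = "(UNIV :: ('a \<times> 'a \<times> 'a \<times> 'a) set) \<times> Wsp"
  have inj: "inj_on ?G ?D"
    unfolding inj_on_def using decomp_unique by fastforce
  have img: "?G ` ?D = UNIV"
  proof -
    have "v \<in> ?G ` ?D" for v
      using decomp[of v] prj_W[of v] by (auto intro!: image_eqI[where x="((B v c0, B v d0, B v a0, B v b0), prj v)"])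
    thus ?thesis by blast
  qed
  have "CARD('a^6) = card ?D" using card_image[OF inj] img by simp
  also have "\<dots> = CARD('a) ^ 4 * card Wsp"
    unfolding card_cartesian_product by (simp add: card_prod power4_eq_xxxx)
  finally have "CARD('a) ^ 6 = CARD('a) ^ 4 * card Wsp" by simp
  moreover have "CARD('a) ^ 6 = CARD('a) ^ 4 * CARD('a) ^ 2" using power_add[of "CARD('a)" 4 2] by simp
  ultimately have e: "CARD('a) ^ 4 * card Wsp = CARD('a) ^ 4 * CARD('a) ^ 2" by linarith
  have ne: "CARD('a) ^ 4 \<noteq> 0" by simp
  from mult_left_cancel[OF ne] e show ?thesis by blast
qed

lemma sq_inj: "inj (\<lambda>r::'a. r * r)"
proof (rule injI)
  fix r s :: 'a assume h: "r * r = s * s"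
  have "(r + s) * (r + s) = r * r + s * s + (r * s + r * s)" by (simp add: algebra_simps)
  also have "\<dots> = 0" using h by (simp add: xx)
  finally show "r = s" by (simp add: minus_is_plus[symmetric])
qed

lemma sq_surj: "\<exists>r::'a. r * r = \<alpha>"
proof -
  have "surj (\<lambda>r::'a. r * r)" by (rule finite_UNIV_inj_surj[OF finite sq_inj])
  thus ?thesis by (metis surjD)
qed

lemma N_eq: assumes "\<alpha> \<noteq> 0" shows "card {w \<in> Wsp. f w = \<alpha>} = card {w \<in> Wsp. f w = 1}"
proof -
  obtain r where r: "r * r = \<alpha>" using sq_surj by blast
  hence r0: "r \<noteq> 0" using assms by auto
  have W_sc: "w \<in> Wsp \<Longrightarrow> s *s w \<in> Wsp" for s w unfolding Wsp_def by (simp add: polar_smult1)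
  have "bij_betw (\<lambda>w. r *s w) {w \<in> Wsp. f w = 1} {w \<in> Wsp. f w = \<alpha>}"
  proof (rule bij_betw_imageI)
    show "inj_on ((*s) r) {w \<in> Wsp. f w = 1}" using r0 by (auto simp: inj_on_def)
    show "(*s) r ` {w \<in> Wsp. f w = 1} = {w \<in> Wsp. f w = \<alpha>}"
    proof
      show "(*s) r ` {w \<in> Wsp. f w = 1} \<subseteq> {w \<in> Wsp. f w = \<alpha>}" using r W_sc by (auto simp: f_smult)
      show "{w \<in> Wsp. f w = \<alpha>} \<subseteq> (*s) r ` {w \<in> Wsp. f w = 1}"
      proof
        fix w assume w: "w \<in> {w \<in> Wsp. f w = \<alpha>}"
        have "f ((1/r) *s w) = 1" using w r r0 assms by (simp add: f_smult field_simps)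
        moreover have "w = r *s ((1/r) *s w)" using r0 by simp
        ultimately show "w \<in> (*s) r ` {w \<in> Wsp. f w = 1}" using w W_sc by blast
      qed
    qed
  qed
  thus ?thesis by (simp add: bij_betw_same_card)
qed

lemma N1: "card {w \<in> Wsp. f w = 1} = CARD('a) + 1"
proof -
  let ?S = "\<lambda>\<alpha>. {w \<in> Wsp. f w = \<alpha>}"
  have eq: "Wsp - {0} = (\<Union>\<alpha>\<in>{\<alpha>::'a. \<alpha> \<noteq> 0}. ?S \<alpha>)"
  proof
    show "Wsp - {0} \<subseteq> (\<Union>\<alpha>\<in>{\<alpha>::'a. \<alpha> \<noteq> 0}. ?S \<alpha>)" using aniso by auto
    show "(\<Union>\<alpha>\<in>{\<alpha>::'a. \<alpha> \<noteq> 0}. ?S \<alpha>) \<subseteq> Wsp - {0}" by auto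
  qed
  have "card (Wsp - {0}) = (\<Sum>\<alpha>\<in>{\<alpha>::'a. \<alpha> \<noteq> 0}. card (?S \<alpha>))"
    unfolding eq by (rule card_UN_disjoint) auto
  also have "\<dots> = (\<Sum>\<alpha>\<in>{\<alpha>::'a. \<alpha> \<noteq> 0}. card (?S 1))" by (rule sum.cong[OF refl], rule N_eq, simp)
  also have "\<dots> = (CARD('a) - 1) * card (?S 1)"
  proof -
    have "{\<alpha>::'a. \<alpha> \<noteq> 0} = UNIV - {0}" by auto
    hence "card {\<alpha>::'a. \<alpha> \<noteq> 0} = CARD('a) - 1" by (simp add: card_Diff_subset)
    thus ?thesis by simp
  qed
  finally have h: "CARD('a) ^ 2 - 1 = (CARD('a) - 1) * card (?S 1)"
    using card_Wsp W0 by (simp add: card_Diff_singleton)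
  have q2: "CARD('a) \<ge> 2" using card2 .
  have "CARD('a) ^ 2 - 1 = (CARD('a) - 1) * (CARD('a) + 1)"
    using q2 by (simp add: power2_eq_square algebra_simps)
  with h have e: "(CARD('a) - 1) * card (?S 1) = (CARD('a) - 1) * (CARD('a) + 1)" by simp
  have ne: "CARD('a) - 1 \<noteq> 0" using q2 by simp
  from mult_left_cancel[OF ne] e show ?thesis by blast
qed

end

context quad
begin

definition Val1 where "Val1 = {p. B a0 p = 1 \<and> B b0 p \<noteq> 0 \<and> B c0 p \<noteq> 0 \<and> B d0 p \<noteq> 0
   \<and> f p = B c0 p \<and> f p = B b0 p * B d0 p}"

definition Tset :: "('a \<times> 'a \<times> ('a^6)) set" where "Tset = (SIGMA \<alpha>:{\<alpha>. \<alpha> \<noteq> 0}. {\<beta>. \<beta> \<noteq> 0} \<times> {w \<in> Wsp. f w = \<alpha>})"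

definition cen where "cen = (\<lambda>(\<alpha>, \<beta>, w). hc \<alpha> \<beta> 1 (\<alpha> / \<beta>) + w)"

lemma Bcen: "w \<in> Wsp \<Longrightarrow> B a0 (hc x y z t + w) = z \<and> B b0 (hc x y z t + w) = t \<and>
    B c0 (hc x y z t + w) = x \<and> B d0 (hc x y z t + w) = y"
  using B_w[of w] by (simp add: polar_add2 B_hc2)

lemma cen_bij: "bij_betw cen Tset Val1"
proof (rule bij_betw_imageI)
  show "inj_on cen Tset"
    unfolding inj_on_def cen_def Tset_def using decomp_unique by fastforce
  show "cen ` Tset = Val1"
  proof
    show "cen ` Tset \<subseteq> Val1"
    proof
      fix p assume "p \<in> cen ` Tset"
      then obtain \<alpha> \<beta> w where h: "\<alpha> \<noteq> 0" "\<beta> \<noteq> 0" "w \<in> Wsp" "f w = \<alpha>" and p: "p = hc \<alpha> \<beta> 1 (\<alpha> / \<beta>) + w"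
        unfolding Tset_def cen_def by auto
      have fp: "f p = \<alpha>" unfolding p using f_hc_w[OF h(3)] h xx[of \<alpha>] by simp
      show "p \<in> Val1" unfolding Val1_def using Bcen[OF h(3)] h fp p by simp
    qed
    show "Val1 \<subseteq> cen ` Tset"
    proof
      fix p assume p: "p \<in> Val1"
      let ?\<alpha> = "B c0 p" and ?\<beta> = "B d0 p" and ?w = "prj p"
      have h: "B a0 p = 1" "B b0 p \<noteq> 0" "?\<alpha> \<noteq> 0" "?\<beta> \<noteq> 0" "f p = ?\<alpha>" "f p = B b0 p * ?\<beta>"
        using p unfolding Val1_def by auto
      have sy: "B p c0 = ?\<alpha>" "B p d0 = ?\<beta>" "B p a0 = 1" "B p b0 = B b0 p"
        using h polar_sym by metis+
      have bb: "B b0 p = ?\<alpha> / ?\<beta>" using h by (simp add: field_simps)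
      have dec: "p = hc ?\<alpha> ?\<beta> 1 (?\<alpha> / ?\<beta>) + ?w" using decomp[of p] sy bb by simp
      have "f p = ?\<alpha> * 1 + ?\<beta> * (?\<alpha> / ?\<beta>) + f ?w" using f_hc_w[OF prj_W, of ?\<alpha> ?\<beta> 1 "?\<alpha> / ?\<beta>" p] dec by simp
      hence "f ?w = ?\<alpha>" using h xx[of ?\<alpha>] by (simp add: field_simps)
      hence "(?\<alpha>, ?\<beta>, ?w) \<in> Tset" unfolding Tset_def using h prj_W by simp
      moreover have "cen (?\<alpha>, ?\<beta>, ?w) = p" unfolding cen_def using dec by simp
      ultimately show "p \<in> cen ` Tset" by (metis image_eqI)
    qed
  qed
qed

end

context quadF
begin

lemma card_Tset: "card Tset = (CARD('a) - 1) ^ 2 * (CARD('a) + 1)"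
proof -
  have c0: "card {\<beta>::'a. \<beta> \<noteq> 0} = CARD('a) - 1"
  proof -
    have "{\<alpha>::'a. \<alpha> \<noteq> 0} = UNIV - {0}" by auto
    thus ?thesis by (simp add: card_Diff_subset)
  qed
  have "card Tset = (\<Sum>\<alpha>\<in>{\<alpha>::'a. \<alpha> \<noteq> 0}. card ({\<beta>::'a. \<beta> \<noteq> 0} \<times> {w \<in> Wsp. f w = \<alpha>}))"
    unfolding Tset_def by (rule card_SigmaI[of "{\<alpha>::'a. \<alpha> \<noteq> 0}" "\<lambda>\<alpha>. {\<beta>::'a. \<beta> \<noteq> 0} \<times> {w \<in> Wsp. f w = \<alpha>}"]) auto
  also have "\<dots> = (\<Sum>\<alpha>\<in>{\<alpha>::'a. \<alpha> \<noteq> 0}. (CARD('a) - 1) * (CARD('a) + 1))"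
  proof (rule sum.cong[OF refl])
    fix \<alpha> :: 'a assume "\<alpha> \<in> {\<alpha>. \<alpha> \<noteq> 0}"
    hence "card {w \<in> Wsp. f w = \<alpha>} = CARD('a) + 1" using N_eq N1 by simp
    thus "card ({\<beta>::'a. \<beta> \<noteq> 0} \<times> {w \<in> Wsp. f w = \<alpha>}) = (CARD('a) - 1) * (CARD('a) + 1)"
      unfolding card_cartesian_product c0 by simp
  qed
  also have "\<dots> = (CARD('a) - 1) * ((CARD('a) - 1) * (CARD('a) + 1))" by (simp only: sum_constant c0 of_nat_id)
  also have "\<dots> = (CARD('a) - 1) ^ 2 * (CARD('a) + 1)" by (simp only: power2_eq_square mult.assoc)
  finally show ?thesis .
qed

lemma card_Val1: "card Val1 = (CARD('a) - 1) ^ 2 * (CARD('a) + 1)"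
  using bij_betw_same_card[OF cen_bij] card_Tset by simp

end

lemma nat14: "{1..4::nat} = {1,2,3,4}" by auto
lemma nat12: "{1..2::nat} = {1,2}" by auto

context qf2
begin

lemma indep2:
  assumes "f p \<noteq> 0" "f u = 0" "u \<noteq> 0"
  shows "vec.independent {u, p}" "u \<noteq> p"
proof -
  show "u \<noteq> p" using assms by auto
  have p0: "p \<noteq> 0" using assms by auto
  have "u \<notin> vec.span {p}"
  proof
    assume "u \<in> vec.span {p}"
    then obtain t where t: "u = t *s p" unfolding vec.span_singleton by auto
    hence "t * t * f p = 0" using assms f_smult by metis
    hence "t = 0" using assms by simp
    thus False using t assms by simp
  qed
  thus "vec.independent {u, p}" using p0 by (simp add: vec.independent_insert)
qed

lemma line_dim: assumes "f p \<noteq> 0" "f u = 0" "u \<noteq> 0"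
  shows "vec.dim (vec.span {u, p}) = 2"
  using vec.dim_span_eq_card_independent[OF indep2(1)[OF assms]] indep2(2)[OF assms] by simp

lemma pt_sub: "v \<in> L \<Longrightarrow> vec.subspace L \<Longrightarrow> pt v \<subseteq> L"
  unfolding pt_def by (rule vec.span_minimal) auto

lemma line_common:
  assumes "f p \<noteq> 0" "f u = 0" "u \<noteq> 0"
  shows "on_common_line (pt p) (pt u) (pt (sig p u))" "on_common_line (pt p) (pt (sig p u)) (pt u)"
proof -
  let ?L = "vec.span {u, p}"
  have s: "vec.subspace ?L" by simp
  have "pt p \<subseteq> ?L" "pt u \<subseteq> ?L" "pt (sig p u) \<subseteq> ?L"
    using pt_sub[OF _ s] sig_span[of p u] by (auto intro: vec.span_base)
  thus "on_common_line (pt p) (pt u) (pt (sig p u))" "on_common_line (pt p) (pt (sig p u)) (pt u)"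
    unfolding on_common_line_def using s line_dim[OF assms] by blast+
qed

lemma CL:
  assumes L: "vec.subspace L" "vec.dim L = 2" "pt p \<subseteq> L" "pt u \<subseteq> L" "pt v \<subseteq> L"
    and fp: "f p \<noteq> 0" and u: "f u = 0" "u \<noteq> 0" and v: "f v = 0" "v \<noteq> 0" and ne: "pt v \<noteq> pt u"
    and up: "B u p \<noteq> 0"
  shows "pt v = pt (sig p u)"
proof -
  have ind: "vec.independent {u, p}" and up': "u \<noteq> p" using indep2[OF fp u(1) u(2)] by auto
  have "{u, p} \<subseteq> L" using L self_in_pt by blast
  moreover have "vec.dim L \<le> card {u, p}" using L up' by simp
  ultimately have "L \<subseteq> vec.span {u, p}" using vec.card_ge_dim_independent ind by blast
  hence "v \<in> vec.span {u, p}" using L self_in_pt by blast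
  then obtain k where "v - k *s u \<in> vec.span {p}" using vec.span_breakdown_eq by blast
  then obtain t where t: "v - k *s u = t *s p" unfolding vec.span_singleton by auto
  hence vk: "v = k *s u + t *s p" by (simp add: algebra_simps)
  have "f v = k * k * f u + t * t * f p + k * t * B u p"
    unfolding vk by (simp add: f_add f_smult polar_smult1 polar_smult2 algebra_simps)
  hence e: "t * (t * f p + k * B u p) = 0" using v u by (simp add: algebra_simps)
  have t0: "t \<noteq> 0"
  proof
    assume "t = 0"
    hence "v = k *s u" using vk by simp
    moreover hence "k \<noteq> 0" using v by auto
    ultimately show False using ne pt_smult by metis
  qed
  hence e2: "t * f p = k * B u p" using e by (simp add: minus_is_plus[symmetric])
  hence k0: "k \<noteq> 0" using t0 fp by auto
  have "k *s sig p u = v" unfolding sig_def vk using e2 fp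
    by (simp add: vector_sadd_rdistrib[symmetric] vector_add_ldistrib field_simps)
  thus ?thesis using pt_smult[OF k0] by metis
qed

end

context quad
begin

definition Cof where "Cof p = {pt a0, pt b0, pt c0, pt d0, pt (sig p a0), pt (sig p b0), pt (sig p c0), pt (sig p d0)}"

lemma val_basic:
  assumes "p \<in> Val1"
  shows "f p = B c0 p" "f p \<noteq> 0" "B a0 p = 1" "B b0 p \<noteq> 0" "B c0 p \<noteq> 0" "B d0 p \<noteq> 0"
    "B b0 p * B d0 p = B c0 p" "B d0 p * B b0 p = B c0 p"
    "B p a0 = 1" "B p b0 \<noteq> 0" "B p c0 \<noteq> 0" "B p d0 \<noteq> 0"
  using assms unfolding Val1_def by (auto simp: polar_sym[of p] mult.commute)

lemma Bsym0: "B u v = 0 \<Longrightarrow> B v u = 0" using polar_sym by metis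
lemma Bsym1: "B u v \<noteq> 0 \<Longrightarrow> B v u \<noteq> 0" using polar_sym by metis

lemma val_Z:
  assumes p: "p \<in> Val1"
  shows "B a0 (sig p c0) = 0" "B (sig p b0) d0 = 0" "B c0 (sig p a0) = 0" "B (sig p d0) b0 = 0"
    "B (sig p b0) (sig p a0) = 0" "B (sig p b0) (sig p c0) = 0"
    "B (sig p d0) (sig p a0) = 0" "B (sig p d0) (sig p c0) = 0"
  using val_basic[OF p] by (simp_all add: B_sig1 B_sig2 B_sig_sig Bv one_one ch2)

lemma val_N:
  assumes p: "p \<in> Val1"
  shows "B a0 (sig p b0) \<noteq> 0" "B a0 (sig p d0) \<noteq> 0" "B (sig p b0) c0 \<noteq> 0" "B (sig p b0) (sig p d0) \<noteq> 0"
    "B c0 (sig p d0) \<noteq> 0" "B (sig p a0) b0 \<noteq> 0" "B (sig p a0) (sig p c0) \<noteq> 0" "B (sig p a0) d0 \<noteq> 0"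
    "B b0 (sig p c0) \<noteq> 0" "B (sig p c0) d0 \<noteq> 0"
    "B a0 (sig p a0) \<noteq> 0" "B (sig p b0) b0 \<noteq> 0" "B c0 (sig p c0) \<noteq> 0" "B (sig p d0) d0 \<noteq> 0"
  using val_basic[OF p] by (simp_all add: B_sig1 B_sig2 B_sig_sig Bv three)

lemma cubeB:
  assumes p: "p \<in> Val1"
  shows "B a0 b0 = 0"
    "B a0 (sig p c0) = 0"
    "B a0 d0 = 0"
    "B (sig p a0) (sig p b0) = 0"
    "B (sig p a0) c0 = 0"
    "B (sig p a0) (sig p d0) = 0"
    "B (sig p b0) (sig p a0) = 0"
    "B (sig p b0) (sig p c0) = 0"
    "B (sig p b0) d0 = 0"
    "B b0 a0 = 0"
    "B b0 c0 = 0"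
    "B b0 (sig p d0) = 0"
    "B c0 (sig p a0) = 0"
    "B c0 b0 = 0"
    "B c0 d0 = 0"
    "B (sig p c0) a0 = 0"
    "B (sig p c0) (sig p b0) = 0"
    "B (sig p c0) (sig p d0) = 0"
    "B (sig p d0) (sig p a0) = 0"
    "B (sig p d0) b0 = 0"
    "B (sig p d0) (sig p c0) = 0"
    "B d0 a0 = 0"
    "B d0 (sig p b0) = 0"
    "B d0 c0 = 0"
    "B a0 (sig p a0) \<noteq> 0"
    "B a0 (sig p b0) \<noteq> 0"
    "B a0 c0 \<noteq> 0"
    "B a0 (sig p d0) \<noteq> 0"
    "B (sig p a0) a0 \<noteq> 0"
    "B (sig p a0) b0 \<noteq> 0"
    "B (sig p a0) (sig p c0) \<noteq> 0"
    "B (sig p a0) d0 \<noteq> 0"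
    "B (sig p b0) a0 \<noteq> 0"
    "B (sig p b0) b0 \<noteq> 0"
    "B (sig p b0) c0 \<noteq> 0"
    "B (sig p b0) (sig p d0) \<noteq> 0"
    "B b0 (sig p a0) \<noteq> 0"
    "B b0 (sig p b0) \<noteq> 0"
    "B b0 (sig p c0) \<noteq> 0"
    "B b0 d0 \<noteq> 0"
    "B c0 a0 \<noteq> 0"
    "B c0 (sig p b0) \<noteq> 0"
    "B c0 (sig p c0) \<noteq> 0"
    "B c0 (sig p d0) \<noteq> 0"
    "B (sig p c0) (sig p a0) \<noteq> 0"
    "B (sig p c0) b0 \<noteq> 0"
    "B (sig p c0) c0 \<noteq> 0"
    "B (sig p c0) d0 \<noteq> 0"
    "B (sig p d0) a0 \<noteq> 0"
    "B (sig p d0) (sig p b0) \<noteq> 0"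
    "B (sig p d0) c0 \<noteq> 0"
    "B (sig p d0) d0 \<noteq> 0"
    "B d0 (sig p a0) \<noteq> 0"
    "B d0 b0 \<noteq> 0"
    "B d0 (sig p c0) \<noteq> 0"
    "B d0 (sig p d0) \<noteq> 0"
  using val_basic[OF p] by (simp_all add: B_sig1 B_sig2 Bv one_one ch2 three)

lemma cubeD:
  assumes p: "p \<in> Val1"
  shows "pt a0 \<noteq> pt (sig p a0)"
    "pt a0 \<noteq> pt (sig p b0)"
    "pt a0 \<noteq> pt b0"
    "pt a0 \<noteq> pt c0"
    "pt a0 \<noteq> pt (sig p c0)"
    "pt a0 \<noteq> pt (sig p d0)"
    "pt a0 \<noteq> pt d0"
    "pt (sig p a0) \<noteq> pt (sig p b0)"
    "pt (sig p a0) \<noteq> pt b0"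
    "pt (sig p a0) \<noteq> pt c0"
    "pt (sig p a0) \<noteq> pt (sig p c0)"
    "pt (sig p a0) \<noteq> pt (sig p d0)"
    "pt (sig p a0) \<noteq> pt d0"
    "pt (sig p b0) \<noteq> pt b0"
    "pt (sig p b0) \<noteq> pt c0"
    "pt (sig p b0) \<noteq> pt (sig p c0)"
    "pt (sig p b0) \<noteq> pt (sig p d0)"
    "pt (sig p b0) \<noteq> pt d0"
    "pt b0 \<noteq> pt c0"
    "pt b0 \<noteq> pt (sig p c0)"
    "pt b0 \<noteq> pt (sig p d0)"
    "pt b0 \<noteq> pt d0"
    "pt c0 \<noteq> pt (sig p c0)"
    "pt c0 \<noteq> pt (sig p d0)"
    "pt c0 \<noteq> pt d0"
    "pt (sig p c0) \<noteq> pt (sig p d0)"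
    "pt (sig p c0) \<noteq> pt d0"
    "pt (sig p d0) \<noteq> pt d0"
    "pt (sig p a0) \<noteq> pt a0"
    "pt (sig p b0) \<noteq> pt a0"
    "pt b0 \<noteq> pt a0"
    "pt c0 \<noteq> pt a0"
    "pt (sig p c0) \<noteq> pt a0"
    "pt (sig p d0) \<noteq> pt a0"
    "pt d0 \<noteq> pt a0"
    "pt (sig p b0) \<noteq> pt (sig p a0)"
    "pt b0 \<noteq> pt (sig p a0)"
    "pt c0 \<noteq> pt (sig p a0)"
    "pt (sig p c0) \<noteq> pt (sig p a0)"
    "pt (sig p d0) \<noteq> pt (sig p a0)"
    "pt d0 \<noteq> pt (sig p a0)"
    "pt b0 \<noteq> pt (sig p b0)"
    "pt c0 \<noteq> pt (sig p b0)"
    "pt (sig p c0) \<noteq> pt (sig p b0)"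
    "pt (sig p d0) \<noteq> pt (sig p b0)"
    "pt d0 \<noteq> pt (sig p b0)"
    "pt c0 \<noteq> pt b0"
    "pt (sig p c0) \<noteq> pt b0"
    "pt (sig p d0) \<noteq> pt b0"
    "pt d0 \<noteq> pt b0"
    "pt (sig p c0) \<noteq> pt c0"
    "pt (sig p d0) \<noteq> pt c0"
    "pt d0 \<noteq> pt c0"
    "pt (sig p d0) \<noteq> pt (sig p c0)"
    "pt d0 \<noteq> pt (sig p c0)"
    "pt d0 \<noteq> pt (sig p d0)"
proof -
  note c = cubeB[OF p]
  have d0: "pt a0 \<noteq> pt (sig p a0)" by (rule pt_neq'[of _ "a0"]) (simp_all add: c)
  have d1: "pt a0 \<noteq> pt (sig p b0)" by (rule pt_neq'[of _ "a0"]) (simp_all add: c)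
  have d2: "pt a0 \<noteq> pt b0" by (rule pt_neq'[of _ "(sig p c0)"]) (simp_all add: c)
  have d3: "pt a0 \<noteq> pt c0" by (rule pt_neq'[of _ "a0"]) (simp_all add: c)
  have d4: "pt a0 \<noteq> pt (sig p c0)" by (rule pt_neq'[of _ "b0"]) (simp_all add: c)
  have d5: "pt a0 \<noteq> pt (sig p d0)" by (rule pt_neq'[of _ "a0"]) (simp_all add: c)
  have d6: "pt a0 \<noteq> pt d0" by (rule pt_neq'[of _ "b0"]) (simp_all add: c)
  have d7: "pt (sig p a0) \<noteq> pt (sig p b0)" by (rule pt_neq'[of _ "c0"]) (simp_all add: c)
  have d8: "pt (sig p a0) \<noteq> pt b0" by (rule pt_neq'[of _ "(sig p a0)"]) (simp_all add: c)
  have d9: "pt (sig p a0) \<noteq> pt c0" by (rule pt_neq'[of _ "(sig p b0)"]) (simp_all add: c)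
  have d10: "pt (sig p a0) \<noteq> pt (sig p c0)" by (rule pt_neq'[of _ "(sig p a0)"]) (simp_all add: c)
  have d11: "pt (sig p a0) \<noteq> pt (sig p d0)" by (rule pt_neq'[of _ "(sig p b0)"]) (simp_all add: c)
  have d12: "pt (sig p a0) \<noteq> pt d0" by (rule pt_neq'[of _ "(sig p a0)"]) (simp_all add: c)
  have d13: "pt (sig p b0) \<noteq> pt b0" by (rule pt_neq'[of _ "(sig p b0)"]) (simp_all add: c)
  have d14: "pt (sig p b0) \<noteq> pt c0" by (rule pt_neq'[of _ "(sig p b0)"]) (simp_all add: c)
  have d15: "pt (sig p b0) \<noteq> pt (sig p c0)" by (rule pt_neq'[of _ "(sig p a0)"]) (simp_all add: c)
  have d16: "pt (sig p b0) \<noteq> pt (sig p d0)" by (rule pt_neq'[of _ "(sig p b0)"]) (simp_all add: c)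
  have d17: "pt (sig p b0) \<noteq> pt d0" by (rule pt_neq'[of _ "(sig p a0)"]) (simp_all add: c)
  have d18: "pt b0 \<noteq> pt c0" by (rule pt_neq'[of _ "a0"]) (simp_all add: c)
  have d19: "pt b0 \<noteq> pt (sig p c0)" by (rule pt_neq'[of _ "b0"]) (simp_all add: c)
  have d20: "pt b0 \<noteq> pt (sig p d0)" by (rule pt_neq'[of _ "a0"]) (simp_all add: c)
  have d21: "pt b0 \<noteq> pt d0" by (rule pt_neq'[of _ "b0"]) (simp_all add: c)
  have d22: "pt c0 \<noteq> pt (sig p c0)" by (rule pt_neq'[of _ "c0"]) (simp_all add: c)
  have d23: "pt c0 \<noteq> pt (sig p d0)" by (rule pt_neq'[of _ "c0"]) (simp_all add: c)
  have d24: "pt c0 \<noteq> pt d0" by (rule pt_neq'[of _ "(sig p a0)"]) (simp_all add: c)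
  have d25: "pt (sig p c0) \<noteq> pt (sig p d0)" by (rule pt_neq'[of _ "a0"]) (simp_all add: c)
  have d26: "pt (sig p c0) \<noteq> pt d0" by (rule pt_neq'[of _ "(sig p c0)"]) (simp_all add: c)
  have d27: "pt (sig p d0) \<noteq> pt d0" by (rule pt_neq'[of _ "(sig p d0)"]) (simp_all add: c)
  show "pt a0 \<noteq> pt (sig p a0)"
    "pt a0 \<noteq> pt (sig p b0)"
    "pt a0 \<noteq> pt b0"
    "pt a0 \<noteq> pt c0"
    "pt a0 \<noteq> pt (sig p c0)"
    "pt a0 \<noteq> pt (sig p d0)"
    "pt a0 \<noteq> pt d0"
    "pt (sig p a0) \<noteq> pt (sig p b0)"
    "pt (sig p a0) \<noteq> pt b0"
    "pt (sig p a0) \<noteq> pt c0"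
    "pt (sig p a0) \<noteq> pt (sig p c0)"
    "pt (sig p a0) \<noteq> pt (sig p d0)"
    "pt (sig p a0) \<noteq> pt d0"
    "pt (sig p b0) \<noteq> pt b0"
    "pt (sig p b0) \<noteq> pt c0"
    "pt (sig p b0) \<noteq> pt (sig p c0)"
    "pt (sig p b0) \<noteq> pt (sig p d0)"
    "pt (sig p b0) \<noteq> pt d0"
    "pt b0 \<noteq> pt c0"
    "pt b0 \<noteq> pt (sig p c0)"
    "pt b0 \<noteq> pt (sig p d0)"
    "pt b0 \<noteq> pt d0"
    "pt c0 \<noteq> pt (sig p c0)"
    "pt c0 \<noteq> pt (sig p d0)"
    "pt c0 \<noteq> pt d0"
    "pt (sig p c0) \<noteq> pt (sig p d0)"
    "pt (sig p c0) \<noteq> pt d0"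
    "pt (sig p d0) \<noteq> pt d0"
    "pt (sig p a0) \<noteq> pt a0"
    "pt (sig p b0) \<noteq> pt a0"
    "pt b0 \<noteq> pt a0"
    "pt c0 \<noteq> pt a0"
    "pt (sig p c0) \<noteq> pt a0"
    "pt (sig p d0) \<noteq> pt a0"
    "pt d0 \<noteq> pt a0"
    "pt (sig p b0) \<noteq> pt (sig p a0)"
    "pt b0 \<noteq> pt (sig p a0)"
    "pt c0 \<noteq> pt (sig p a0)"
    "pt (sig p c0) \<noteq> pt (sig p a0)"
    "pt (sig p d0) \<noteq> pt (sig p a0)"
    "pt d0 \<noteq> pt (sig p a0)"
    "pt b0 \<noteq> pt (sig p b0)"
    "pt c0 \<noteq> pt (sig p b0)"
    "pt (sig p c0) \<noteq> pt (sig p b0)"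
    "pt (sig p d0) \<noteq> pt (sig p b0)"
    "pt d0 \<noteq> pt (sig p b0)"
    "pt c0 \<noteq> pt b0"
    "pt (sig p c0) \<noteq> pt b0"
    "pt (sig p d0) \<noteq> pt b0"
    "pt d0 \<noteq> pt b0"
    "pt (sig p c0) \<noteq> pt c0"
    "pt (sig p d0) \<noteq> pt c0"
    "pt d0 \<noteq> pt c0"
    "pt (sig p d0) \<noteq> pt (sig p c0)"
    "pt d0 \<noteq> pt (sig p c0)"
    "pt d0 \<noteq> pt (sig p d0)"
    using d0 d1 d2 d3 d4 d5 d6 d7 d8 d9 d10 d11 d12 d13 d14 d15 d16 d17 d18 d19 d20 d21 d22 d23 d24 d25 d26 d27 by auto
qed

lemma val_cube:
  assumes p: "p \<in> Val1" and Q: "quadrangle_set f {pt a0, pt b0, pt c0, pt d0}"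
  shows "centric_cube f (Cof p) \<and> face_of_cube f {pt a0, pt b0, pt c0, pt d0} (Cof p)"
proof -
  note vb = val_basic[OF p]
  define xv where "xv = (\<lambda>(i::nat) (j::nat). if i = 1 then (if j = 1 then a0 else sig p a0)
     else if i = 2 then (if j = 1 then sig p b0 else b0)
     else if i = 3 then (if j = 1 then c0 else sig p c0) else (if j = 1 then sig p d0 else d0))"
  define x where "x = (\<lambda>i j. pt (xv i j))"
  have nzs: "sig p a0 \<noteq> 0" "sig p b0 \<noteq> 0" "sig p c0 \<noteq> 0" "sig p d0 \<noteq> 0"
    using vb by (auto intro!: sig_nz)
  have fs: "f (sig p a0) = 0" "f (sig p b0) = 0" "f (sig p c0) = 0" "f (sig p d0) = 0"
    using vb by (simp_all add: f_sig Bv)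
  have Bp: "B p (sig p a0) \<noteq> 0" "B p (sig p b0) \<noteq> 0" "B p (sig p c0) \<noteq> 0" "B p (sig p d0) \<noteq> 0"
    using vb by (simp_all add: polar_sym[of p] B_sig_p)
  note nz' = nz nzs
  have p0: "p \<noteq> 0" using vb by auto
  have cw: "centric_cube_wrt f (pt p) x"
    unfolding centric_cube_wrt_def
  proof (intro conjI)
    show "pt p \<in> proj_points" using p0 proj_points_iff by blast
    show "pt p \<notin> Qpts f" using vb Qpts_pt by simp
    show "inj_on (\<lambda>(i, a). x i a) ({1..4} \<times> {1..2})"
      unfolding nat14 nat12 inj_on_def x_def xv_def using cubeD[OF p] by auto
    show "\<forall>i\<in>{1..4}. \<forall>a\<in>{1..2}. x i a \<in> Qpts f \<and> \<not> perp f (pt p) (x i a)"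
      unfolding nat14 nat12 x_def xv_def Qpts_pt perp_pt using nz' fs Bv vb Bp by simp
    show "\<forall>i\<in>{1..4}. \<forall>a\<in>{1..2}. \<forall>j\<in>{1..4}. \<forall>b\<in>{1..2}. (i, a) \<noteq> (j, b) \<longrightarrow>
        (collinearQ f (x i a) (x j b) \<longleftrightarrow> i \<noteq> j \<and> a \<noteq> b)"
      unfolding nat14 nat12 x_def xv_def collinear_pt using nz' fs Bv cubeD[OF p] cubeB[OF p] by simp
    show "\<forall>i\<in>{1..4}. on_common_line (pt p) (x i 1) (x i 2)"
      unfolding nat14 x_def xv_def using line_common[of p] vb nz Bv by simp
  qed
  have cp: "cube_points x = Cof p"
    unfolding cube_points_def nat14 nat12 x_def xv_def Cof_def by auto
  define s where "s = (\<lambda>i::nat. if i = 1 \<or> i = 3 then 1::nat else 2)"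
  have face: "(\<lambda>i. x i (s i)) ` {1..4} = {pt a0, pt b0, pt c0, pt d0}"
    unfolding nat14 x_def xv_def s_def by auto
  have "face_of_cube f {pt a0, pt b0, pt c0, pt d0} (Cof p)"
    unfolding face_of_cube_def
    apply (rule exI[of _ "pt p"], rule exI[of _ x])
    using cw cp face Q by (auto intro!: exI[of _ s] simp: nat14 s_def)
  moreover have "centric_cube f (Cof p)" unfolding centric_cube_def using cw cp by blast
  ultimately show ?thesis by blast
qed

lemma one_plus_zero: "1 + (y::'a) = 0 \<Longrightarrow> y = 1"
  using neg_id by (metis add.commute add_eq_0_iff2)

lemma face_val:
  assumes fc: "face_of_cube f {pt a0, pt b0, pt c0, pt d0} C"
  shows "\<exists>p\<in>Val1. C = Cof p"
proof -
  obtain P x s where cw: "centric_cube_wrt f P x" and C: "C = cube_points x"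
    and s: "\<forall>i\<in>{1..4}. s i \<in> {1..2}" and F: "{pt a0, pt b0, pt c0, pt d0} = (\<lambda>i. x i (s i)) ` {1..4}"
    using fc unfolding face_of_cube_def by (elim exE conjE) (rule that; assumption)
  have P: "P \<in> proj_points" "P \<notin> Qpts f" using cw unfolding centric_cube_wrt_def by auto
  have inj: "inj_on (\<lambda>(i, a). x i a) ({1..4} \<times> {1..2})" using cw unfolding centric_cube_wrt_def by auto
  have Qx: "x i a \<in> Qpts f" "\<not> perp f P (x i a)" if "i \<in> {1..4}" "a \<in> {1..2}" for i a
    using cw that unfolding centric_cube_wrt_def by auto
  have col: "collinearQ f (x i a) (x j b) \<longleftrightarrow> i \<noteq> j \<and> a \<noteq> b"
    if "i \<in> {1..4}" "a \<in> {1..2}" "j \<in> {1..4}" "b \<in> {1..2}" "(i, a) \<noteq> (j, b)" for i a j b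
    using cw that unfolding centric_cube_wrt_def by blast
  have line: "on_common_line P (x i 1) (x i 2)" if "i \<in> {1..4}" for i
    using cw that unfolding centric_cube_wrt_def by blast
  obtain p1 where p1: "p1 \<noteq> 0" "P = pt p1" using P proj_points_iff by blast
  have fp1: "f p1 \<noteq> 0" using P(2) p1 Qpts_pt by auto
  have s2: "s i \<in> {1..2}" "3 - s i \<in> {1..2}" "3 - s i \<noteq> s i" if "i \<in> {1..4}" for i
  proof -
    have "s i \<in> {1..2}" using s that by blast
    hence "s i = 1 \<or> s i = 2" by auto
    thus "s i \<in> {1..2}" "3 - s i \<in> {1..2}" "3 - s i \<noteq> s i" by auto
  qed
  have idx: "\<exists>i\<in>{1..4}. x i (s i) = pt g" if "g \<in> {a0, b0, c0, d0}" for g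
  proof -
    have "pt g \<in> (\<lambda>i. x i (s i)) ` {1..4}" using F that by blast
    thus ?thesis by (metis imageE)
  qed
  have gp1: "B g p1 \<noteq> 0" if g: "g \<in> {a0, b0, c0, d0}" for g
  proof -
    obtain i where i: "i \<in> {1..4}" "x i (s i) = pt g" using idx[OF g] by blast
    have "\<not> perp f (pt p1) (pt g)" using Qx(2)[OF i(1) s2(1)[OF i(1)]] i(2) p1(2) by simp
    hence "B p1 g \<noteq> 0" using perp_pt by simp
    thus ?thesis using polar_sym[of g p1] by simp
  qed
  define p where "p = (1 / B a0 p1) *s p1"
  have a1: "B a0 p1 \<noteq> 0" using gp1 by simp
  have Pp: "P = pt p" unfolding p_def using p1(2) pt_smult[of "1 / B a0 p1" p1] a1 by simp
  have pa: "B a0 p = 1" unfolding p_def using a1 by (simp add: polar_smult2)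
  have fp: "f p \<noteq> 0" unfolding p_def using a1 fp1 by (simp add: f_smult)
  have gp: "B g p \<noteq> 0" if "g \<in> {a0, b0, c0, d0}" for g
    unfolding p_def using a1 gp1[OF that] by (simp add: polar_smult2)
  have partner: "x i (3 - s i) = pt (sig p u)" if i: "i \<in> {1..4}" "x i (s i) = pt u" for i u
  proof -
    have Xu: "pt u \<in> Qpts f" "\<not> perp f (pt p) (pt u)" using Qx[OF i(1) s2(1)[OF i(1)]] i(2) Pp by auto
    hence u: "u \<noteq> 0" "f u = 0" "B u p \<noteq> 0" using Qpts_pt perp_pt polar_sym[of u p] by simp_all
    have "x i (3 - s i) \<in> Qpts f" using Qx[OF i(1) s2(2)[OF i(1)]] by simp
    then obtain v where v: "v \<noteq> 0" "x i (3 - s i) = pt v" unfolding Qpts_def using proj_points_iff by blast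
    hence fv: "f v = 0" using \<open>x i (3 - s i) \<in> Qpts f\<close> Qpts_pt by simp
    have ne: "pt v \<noteq> pt u"
    proof
      assume "pt v = pt u"
      hence "x i (3 - s i) = x i (s i)" using v i by simp
      moreover have "(i, 3 - s i) \<in> {1..4} \<times> {1..2}" "(i, s i) \<in> {1..4} \<times> {1..2}" using i s2 by auto
      ultimately have "(i, 3 - s i) = (i, s i)" using inj unfolding inj_on_def by fastforce
      thus False using s2(3)[OF i(1)] by simp
    qed
    obtain L where L: "vec.subspace L" "vec.dim L = 2" "P \<subseteq> L" "x i 1 \<subseteq> L" "x i 2 \<subseteq> L"
      using line[OF i(1)] unfolding on_common_line_def by blast
    have sub: "x i j \<subseteq> L" if "j \<in> {1..2}" for j
    proof -
      have "j = 1 \<or> j = 2" using that by auto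
      thus ?thesis using L by auto
    qed
    have "x i (s i) \<subseteq> L" "x i (3 - s i) \<subseteq> L" using sub s2[OF i(1)] by auto
    hence "pt v = pt (sig p u)" using CL[OF L(1,2) _ _ _ fp u(2) u(1) fv v(1) ne u(3)] L Pp i(2) v(2) by simp
    thus ?thesis using v by simp
  qed
  have key: "B g (sig p h) = 0" if g: "g \<in> {a0, b0, c0, d0}" and h: "h \<in> {a0, b0, c0, d0}" and gh: "B g h \<noteq> 0" for g h
  proof -
    obtain i where i: "i \<in> {1..4}" "x i (s i) = pt g" using idx[OF g] by blast
    obtain j where j: "j \<in> {1..4}" "x j (s j) = pt h" using idx[OF h] by blast
    have "pt g \<noteq> pt h" using pt_neq'[of g g h] gh polar_sym[of g h] by simp
    hence ij: "i \<noteq> j" using i j by auto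
    have "\<not> collinearQ f (pt g) (pt h)" using collinear_pt gh by simp
    hence "s i = s j" using col[OF i(1) s2(1)[OF i(1)] j(1) s2(1)[OF j(1)]] ij i j by auto
    hence "collinearQ f (x i (s i)) (x j (3 - s j))"
      using col[OF i(1) s2(1)[OF i(1)] j(1) s2(2)[OF j(1)]] ij s2[OF j(1)] by auto
    hence "collinearQ f (pt g) (pt (sig p h))" using partner[OF j] i by simp
    thus ?thesis using collinear_pt by simp
  qed
  have "B a0 (sig p c0) = 0" using key[of a0 c0] ac by simp
  hence "1 + B c0 p / f p = 0" using pa by (simp add: B_sig2 ac)
  hence e1: "f p = B c0 p" using one_plus_zero fp by (metis divide_eq_1_iff)
  have "B b0 (sig p d0) = 0" using key[of b0 d0] bd by simp
  hence "1 + B d0 p * B b0 p / f p = 0" by (simp add: B_sig2 bd)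
  hence e2: "f p = B b0 p * B d0 p" using one_plus_zero fp by (metis divide_eq_1_iff mult.commute)
  have pV: "p \<in> Val1" unfolding Val1_def using pa gp e1 e2 by simp
  have "C = Cof p"
  proof
    show "C \<subseteq> Cof p"
    proof
      fix y assume "y \<in> C"
      then obtain i j where ij: "i \<in> {1..4}" "j \<in> {1..2}" "y = x i j" unfolding C cube_points_def by auto
      show "y \<in> Cof p"
      proof (cases "j = s i")
        case True
        hence "y \<in> {pt a0, pt b0, pt c0, pt d0}" using F ij by auto
        thus ?thesis unfolding Cof_def by auto
      next
        case False
        hence j': "j = 3 - s i" using ij s2[OF ij(1)] by auto
        have "x i (s i) \<in> {pt a0, pt b0, pt c0, pt d0}" using F ij by auto
        then obtain g where g: "g \<in> {a0, b0, c0, d0}" "x i (s i) = pt g" by auto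
        have "y = pt (sig p g)" using partner[OF ij(1) g(2)] j' ij by simp
        thus ?thesis using g unfolding Cof_def by auto
      qed
    qed
    show "Cof p \<subseteq> C"
    proof -
      have "pt g \<in> C \<and> pt (sig p g) \<in> C" if g: "g \<in> {a0, b0, c0, d0}" for g
      proof -
        obtain i where i: "i \<in> {1..4}" "x i (s i) = pt g" using idx[OF g] by blast
        have "x i (s i) \<in> C" "x i (3 - s i) \<in> C" unfolding C cube_points_def using i s2[OF i(1)] by force+
        thus ?thesis using partner[OF i] i by simp
      qed
      thus ?thesis unfolding Cof_def by auto
    qed
  qed
  thus ?thesis using pV by blast
qed

lemma sig_eq_shift:
  assumes p: "p \<in> Val1" and q: "q \<in> Val1" and g: "B g p \<noteq> 0" "B g q \<noteq> 0" "B g a0 = 0"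
    and e: "pt (sig q g) = pt (sig p g)"
  shows "\<exists>\<mu>. q = p + \<mu> *s g"
proof -
  note vp = val_basic[OF p] and vq = val_basic[OF q]
  obtain r where r: "sig q g = r *s sig p g" using pt_eq_scale[OF e] by blast
  let ?kq = "B g q / f q" and ?kp = "B g p / f p"
  have e1: "g + ?kq *s q = r *s g + (r * ?kp) *s p" using r unfolding sig_def by (simp add: vector_add_ldistrib)
  have "B (g + ?kq *s q) a0 = B (r *s g + (r * ?kp) *s p) a0" using e1 by simp
  hence rr: "?kq = r * ?kp" using g vp vq by (simp add: polar_add1 polar_smult1)
  have kq0: "?kq \<noteq> 0" using g vq by simp
  have "q $ i = p $ i + ((r - 1) / ?kq) * g $ i" for i
  proof -
    have "g $ i + ?kq * q $ i = r * g $ i + (r * ?kp) * p $ i" using arg_cong[OF e1, of "\<lambda>v. v $ i"] by simp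
    hence "g $ i + ?kq * q $ i = r * g $ i + ?kq * p $ i" using rr by simp
    hence "?kq * q $ i = ?kq * p $ i + (r - 1) * g $ i" by (simp add: algebra_simps)
    thus ?thesis using kq0 by (simp add: field_simps)
  qed
  hence "q = p + ((r - 1) / ?kq) *s g" by (simp add: vec_eq_iff)
  thus ?thesis by blast
qed

lemma Cof_inj: "inj_on Cof Val1"
proof (rule inj_onI)
  fix p q assume p: "p \<in> Val1" and q: "q \<in> Val1" and E: "Cof p = Cof q"
  note vp = val_basic[OF p] and vq = val_basic[OF q]
  note cp = cubeB[OF p]
  have Ba: "B (sig q a0) a0 \<noteq> 0" "B (sig q a0) b0 \<noteq> 0" "B (sig q a0) d0 \<noteq> 0"
    using vq by (simp_all add: B_sig1 Bv)
  have "pt (sig q a0) \<in> Cof p" using E unfolding Cof_def by auto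
  moreover have "pt (sig q a0) \<noteq> pt a0" "pt (sig q a0) \<noteq> pt b0" "pt (sig q a0) \<noteq> pt d0"
    "pt (sig q a0) \<noteq> pt (sig p c0)"
    by (rule pt_neq[OF Ba(1)], simp add: cp Bv)+
  moreover have "pt (sig q a0) \<noteq> pt c0" "pt (sig q a0) \<noteq> pt (sig p d0)"
    by (rule pt_neq[OF Ba(2)], simp add: cp Bv)+
  moreover have "pt (sig q a0) \<noteq> pt (sig p b0)"
    by (rule pt_neq[OF Ba(3)], simp add: cp Bv)+
  ultimately have ea: "pt (sig q a0) = pt (sig p a0)" unfolding Cof_def by blast
  have Bb: "B (sig q b0) b0 \<noteq> 0" "B (sig q b0) a0 \<noteq> 0" "B (sig q b0) c0 \<noteq> 0"
    using vq by (simp_all add: B_sig1 Bv)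
  have "pt (sig q b0) \<in> Cof p" using E unfolding Cof_def by auto
  moreover have "pt (sig q b0) \<noteq> pt b0" "pt (sig q b0) \<noteq> pt a0" "pt (sig q b0) \<noteq> pt c0"
    "pt (sig q b0) \<noteq> pt (sig p d0)"
    by (rule pt_neq[OF Bb(1)], simp add: cp Bv)+
  moreover have "pt (sig q b0) \<noteq> pt d0" "pt (sig q b0) \<noteq> pt (sig p c0)"
    by (rule pt_neq[OF Bb(2)], simp add: cp Bv)+
  moreover have "pt (sig q b0) \<noteq> pt (sig p a0)"
    by (rule pt_neq[OF Bb(3)], simp add: cp Bv)+
  ultimately have eb: "pt (sig q b0) = pt (sig p b0)" unfolding Cof_def by blast
  obtain \<mu> where mu: "q = p + \<mu> *s a0" using sig_eq_shift[OF p q _ _ _ ea] vp vq by auto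
  obtain \<nu> where nu: "q = p + \<nu> *s b0" using sig_eq_shift[OF p q _ _ _ eb] vp vq Bv by auto
  have "\<mu> *s a0 = \<nu> *s b0" using mu nu by simp
  hence "B (\<mu> *s a0) c0 = B (\<nu> *s b0) c0" by simp
  hence "\<mu> = 0" by (simp add: polar_smult1 Bv)
  thus "p = q" using mu by simp
qed

lemma aniso_witt:
  assumes witt: "witt_index f 2" and w: "w \<in> Wsp" "w \<noteq> 0"
  shows "f w \<noteq> 0"
proof
  assume fw: "f w = 0"
  note Bw = B_w[OF w(1)]
  let ?S = "vec.span {a0, b0, w}"
  have ts: "totally_singular f ?S"
    unfolding totally_singular_def
  proof (intro conjI ballI)
    show "vec.subspace ?S" by simp
    fix v assume "v \<in> ?S"
    then obtain k where "v - k *s a0 \<in> vec.span {b0, w}" using vec.span_breakdown_eq by blast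
    then obtain k' where "v - k *s a0 - k' *s b0 \<in> vec.span {w}" using vec.span_breakdown_eq by blast
    then obtain t where "v - k *s a0 - k' *s b0 = t *s w" unfolding vec.span_singleton by auto
    hence v: "v = k *s a0 + k' *s b0 + t *s w" by (simp add: algebra_simps)
    show "f v = 0" unfolding v using Bw fw
      by (simp add: f_add f_smult polar_add1 polar_add2 polar_smult1 polar_smult2 Bv)
  qed
  have ind: "vec.independent {a0, b0, w}"
  proof -
    have wn: "w \<notin> vec.span {}" using w by simp
    have b: "b0 \<notin> vec.span {w}"
    proof
      assume "b0 \<in> vec.span {w}"
      then obtain t where "b0 = t *s w" unfolding vec.span_singleton by auto
      hence "B b0 d0 = t * B w d0" by (simp add: polar_smult1)
      thus False using Bw bd by simp
    qed
    have a: "a0 \<notin> vec.span {b0, w}"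
    proof
      assume "a0 \<in> vec.span {b0, w}"
      then obtain k where "a0 - k *s b0 \<in> vec.span {w}" using vec.span_breakdown_eq by blast
      then obtain t where "a0 - k *s b0 = t *s w" unfolding vec.span_singleton by auto
      hence "B (a0 - k *s b0) c0 = B (t *s w) c0" by simp
      thus False using Bw by (simp add: polar_diff1 polar_smult1 Bv)
    qed
    have "vec.independent {w}" using w by simp
    hence "vec.independent {b0, w}" using b by (simp add: vec.independent_insert)
    thus ?thesis using a w by (simp add: vec.independent_insert)
  qed
  have ne: "a0 \<noteq> b0" "a0 \<noteq> w" "b0 \<noteq> w"
    using Bw Bv by (metis zero_neq_one)+
  have "vec.dim ?S = 3" using vec.dim_span_eq_card_independent[OF ind] ne by simp
  moreover have "vec.dim ?S \<le> 2" using witt ts unfolding witt_index_def by blast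
  ultimately show False by simp
qed

end

theorem corollary3p7:
  fixes f :: "'a::{finite, field}^6 \<Rightarrow> 'a" and n :: nat
    and a b c d :: "('a^6) set"
  assumes "CARD('a) = 2 ^ n"
    and "quadratic_form f" and "nondegenerate f" and "witt_index f 2"
    and "is_quadrangle f a b c d"
  shows "card {C. centric_cube f C \<and> face_of_cube f {a, b, c, d} C}
           = (CARD('a) - 1)^2 * (CARD('a) + 1)"
proof -
  have ch2: "(2::'a) = 0" using char2_of_card assms(1) by blast
  obtain A :: "6 \<Rightarrow> 6 \<Rightarrow> 'a" where fA: "\<And>x. f x = (\<Sum>i\<in>UNIV. \<Sum>j\<in>UNIV. A i j * x $ i * x $ j)"
    using assms(2) unfolding quadratic_form_def by blast
  interpret Q: qf2 f A by (unfold_locales; rule fA ch2)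
  note iq = assms(5)[unfolded is_quadrangle_def]
  have inQ: "a \<in> Qpts f" "b \<in> Qpts f" "c \<in> Qpts f" "d \<in> Qpts f" using iq by auto
  have gen: "\<exists>v. v \<noteq> 0 \<and> X = pt v \<and> f v = 0" if "X \<in> Qpts f" for X
  proof -
    have "X \<in> proj_points" using that unfolding Qpts_def by simp
    then obtain v where v: "v \<noteq> 0" "X = pt v" using proj_points_iff by blast
    have "f v = 0" using that Q.Qpts_pt[of v] v(2) by simp
    thus ?thesis using v by blast
  qed
  obtain a1 where a1: "a1 \<noteq> 0" "a = pt a1" "f a1 = 0" using gen[OF inQ(1)] by blast
  obtain b1 where b1: "b1 \<noteq> 0" "b = pt b1" "f b1 = 0" using gen[OF inQ(2)] by blast
  obtain c1 where c1: "c1 \<noteq> 0" "c = pt c1" "f c1 = 0" using gen[OF inQ(3)] by blast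
  obtain d1 where d1: "d1 \<noteq> 0" "d = pt d1" "f d1 = 0" using gen[OF inQ(4)] by blast
  have Bs: "polar f a1 b1 = 0" "polar f b1 c1 = 0" "polar f c1 d1 = 0" "polar f d1 a1 = 0"
    "polar f a1 c1 \<noteq> 0" "polar f b1 d1 \<noteq> 0"
    using iq a1 b1 c1 d1 Q.perp_pt by auto
  define c0 where "c0 = (1 / polar f a1 c1) *s c1"
  define d0 where "d0 = (1 / polar f b1 d1) *s d1"
  have c0: "c = pt c0" unfolding c0_def using c1 Bs pt_smult[of "1 / polar f a1 c1" c1] by simp
  have d0: "d = pt d0" unfolding d0_def using d1 Bs pt_smult[of "1 / polar f b1 d1" d1] by simp
  interpret QQ: quad f A a1 b1 c0 d0
    by (unfold_locales, unfold c0_def d0_def)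
       (use a1 b1 c1 d1 Bs in \<open>simp_all add: Q.f_smult Q.polar_smult1 Q.polar_smult2\<close>)
  interpret QF: quadF f A a1 b1 c0 d0
    by (unfold_locales) (rule QQ.aniso_witt[OF assms(4)])
  have F: "{a, b, c, d} = {pt a1, pt b1, pt c0, pt d0}" using a1 b1 c0 d0 by simp
  have qs: "quadrangle_set f {pt a1, pt b1, pt c0, pt d0}"
    unfolding quadrangle_set_def
    apply (rule exI[of _ a], rule exI[of _ b], rule exI[of _ c], rule exI[of _ d])
    using F assms(5) by simp
  have S: "{C. centric_cube f C \<and> face_of_cube f {a, b, c, d} C} = QQ.Cof ` QQ.Val1"
  proof
    show "{C. centric_cube f C \<and> face_of_cube f {a, b, c, d} C} \<subseteq> QQ.Cof ` QQ.Val1"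
    proof
      fix C assume "C \<in> {C. centric_cube f C \<and> face_of_cube f {a, b, c, d} C}"
      hence "face_of_cube f {pt a1, pt b1, pt c0, pt d0} C" using F by simp
      then obtain p where "p \<in> QQ.Val1" "C = QQ.Cof p" using QQ.face_val by blast
      thus "C \<in> QQ.Cof ` QQ.Val1" by simp
    qed
    show "QQ.Cof ` QQ.Val1 \<subseteq> {C. centric_cube f C \<and> face_of_cube f {a, b, c, d} C}"
    proof
      fix C assume "C \<in> QQ.Cof ` QQ.Val1"
      then obtain p where p: "p \<in> QQ.Val1" "C = QQ.Cof p" by blast
      have "centric_cube f C \<and> face_of_cube f {pt a1, pt b1, pt c0, pt d0} C"
        using QQ.val_cube[OF p(1) qs] p(2) by simp
      thus "C \<in> {C. centric_cube f C \<and> face_of_cube f {a, b, c, d} C}" using F by simp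
    qed
  qed
  show ?thesis unfolding S card_image[OF QQ.Cof_inj] QF.card_Val1 ..
qed

end
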